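(* Let $L$ be an even hyperbolic lattice and $L'$ an even overlattice of $L$. Then there exist chambers $\mathcal D_L$ of $L$ and $\mathcal D_{L'}$ of $L'$ (in the common hyperbolic space $\mathbb H_L=\mathbb H_{L'}$) such that $\mathcal D_{L'}\subseteq\mathcal D_L$. For such choices, the exceptional lattices satisfy $E(L)\subseteq E(L')$.
   Context: All lattices are even: a lattice is a free $\mathbb Z$-module $L$ of finite rank with a non-degenerate symmetric bilinear form $(x.y)\in\mathbb Z$ such that $x^2:=(x.x)$ is even for all $x$. $L$ is hyperbolic if its signature is $(1,\mathrm{rk}L-1)$. A root is a vector $r\in L$ with $r^2=-2$. For hyperbolic $L$, fix a connected component $\mathcal P_L$ of $\{x\in L\otimes\mathbb R: x^2>0\}$, let $\mathbb H_L=\{x\in\mathcal P_L: x^2=1\}$, and let $O^+(L)$ be the group of isometries of $L$ preserving $\mathcal P_L$. The Weyl group $W(L)\subseteq O^+(L)$ is generated by the reflections $\phi_r(v)=v+(v.r)r$ for roots $r$. The chambers are the connected components of $\mathbb H_L\setminus\bigcup_r r^\perp$ (union over all roots $r$); $W(L)$ acts simply transitively on them. Fix a chamber $\mathcal D_L$; the symmetry group $\mathrm{Aut}(\mathcal D_L)$ is the subgroup of $O^+(L)$ preserving $\mathcal D_L$. The exceptional lattice $E(L)\subseteq L$ is the sublattice of vectors of $L$ whose orbit under $\mathrm{Aut}(\mathcal D_L)$ is finite. An overlattice of $L$ is a lattice $L'\supseteq L$ of the same rank whose form restricts to that of $L$. *)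

theory Defs
  imports "HOL-Analysis.Analysis"
begin

text \<open>Ambient space: the real vector space real^'n, equipped with the bilinear
form given by a symmetric matrix Q. Lattices are full-rank Z-lattices in it, so
L \<otimes> R = real^'n, and an overlattice of L is simply a full-rank lattice containing
L on which the same form is used.\<close>

definition bform :: "real^'n^'n \<Rightarrow> real^'n \<Rightarrow> real^'n \<Rightarrow> real" where
  "bform Q x y = x \<bullet> (Q *v y)"

definition hyperbolic_form :: "real^'n^'n \<Rightarrow> bool" where
  "hyperbolic_form Q \<longleftrightarrow> transpose Q = Q \<and>
     (\<exists>(P::real^'n^'n) i0. invertible P \<and>
        (\<forall>i j. (transpose P ** Q ** P) $ i $ j =
                 (if i = j then (if i = i0 then 1 else -1) else 0)))"

definition full_lattice :: "(real^'n) set \<Rightarrow> bool" where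
  "full_lattice L \<longleftrightarrow> (\<exists>b :: 'n \<Rightarrow> real^'n. inj b \<and> independent (range b) \<and>
      L = {(\<Sum>i\<in>UNIV. c i *\<^sub>R b i) | c. \<forall>i. c i \<in> \<int>})"

definition even_lattice :: "real^'n^'n \<Rightarrow> (real^'n) set \<Rightarrow> bool" where
  "even_lattice Q L \<longleftrightarrow> full_lattice L \<and>
      (\<forall>x\<in>L. \<forall>y\<in>L. bform Q x y \<in> \<int>) \<and>
      (\<forall>x\<in>L. \<exists>k::int. bform Q x x = 2 * of_int k)"

definition roots :: "real^'n^'n \<Rightarrow> (real^'n) set \<Rightarrow> (real^'n) set" where
  "roots Q L = {r \<in> L. bform Q r r = -2}"

text \<open>Hyperbolic space inside the fixed component C of the positive cone.\<close>
definition hyp_space :: "real^'n^'n \<Rightarrow> (real^'n) set \<Rightarrow> (real^'n) set" where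
  "hyp_space Q C = {x \<in> C. bform Q x x = 1}"

definition chamber :: "real^'n^'n \<Rightarrow> (real^'n) set \<Rightarrow> (real^'n) set \<Rightarrow> (real^'n) set \<Rightarrow> bool" where
  "chamber Q L C D \<longleftrightarrow>
     (let S = hyp_space Q C - (\<Union>r\<in>roots Q L. {x. bform Q x r = 0})
      in \<exists>x\<in>S. D = connected_component_set S x)"

text \<open>O^+(L): isometries of L (extended linearly, i.e. as matrices) preserving C.\<close>
definition Oplus :: "real^'n^'n \<Rightarrow> (real^'n) set \<Rightarrow> (real^'n) set \<Rightarrow> (real^'n^'n) set" where
  "Oplus Q L C = {g. (\<lambda>v. g *v v) ` L = L \<and>
      (\<forall>x\<in>L. \<forall>y\<in>L. bform Q (g *v x) (g *v y) = bform Q x y) \<and>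
      (\<lambda>v. g *v v) ` C = C}"

definition Aut_chamber :: "real^'n^'n \<Rightarrow> (real^'n) set \<Rightarrow> (real^'n) set \<Rightarrow> (real^'n) set \<Rightarrow> (real^'n^'n) set" where
  "Aut_chamber Q L C D = {g \<in> Oplus Q L C. (\<lambda>v. g *v v) ` D = D}"

definition exceptional_lattice :: "real^'n^'n \<Rightarrow> (real^'n) set \<Rightarrow> (real^'n) set \<Rightarrow> (real^'n) set \<Rightarrow> (real^'n) set" where
  "exceptional_lattice Q L C D = {v \<in> L. finite ((\<lambda>g. g *v v) ` Aut_chamber Q L C D)}"

end

theory Submission
  imports Defs "HOL-Library.Countable" "HOL-Library.FuncSet"
begin

definition zspan :: "('m::finite \<Rightarrow> real^'n) \<Rightarrow> (real^'n) set" where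
  "zspan b = {(\<Sum>i\<in>UNIV. c i *\<^sub>R b i) | c. \<forall>i. c i \<in> \<int>}"

lemma sum_delta_b:
  fixes b :: "'m::finite \<Rightarrow> real^'n"
  shows "(\<Sum>j\<in>UNIV. (if j = i then 1 else 0) *\<^sub>R b j) = b i"
proof -
  have "(\<Sum>j\<in>UNIV. (if j = i then 1 else 0) *\<^sub>R b j) = (\<Sum>j\<in>UNIV. if j = i then b j else 0)"
    by (rule sum.cong) auto
  then show ?thesis by simp
qed

lemma fl_facts:
  fixes L :: "(real^'n) set"
  assumes "full_lattice L"
  obtains b :: "'n \<Rightarrow> real^'n" where "span (range b) = UNIV"
    "L = zspan b" "range b \<subseteq> L"
proof -
  obtain b :: "'n \<Rightarrow> real^'n" where b: "inj b" "independent (range b)"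
    "L = zspan b"
    using assms unfolding full_lattice_def zspan_def by blast
  have "card (range b) = CARD('n)" using b(1) by (simp add: card_image)
  then have "UNIV \<subseteq> span (range b)"
    using card_ge_dim_independent[of "range b" UNIV] b(2) by simp
  moreover have "range b \<subseteq> L"
  proof
    fix x assume "x \<in> range b"
    then obtain i where x: "x = b i" by auto
    show "x \<in> L" unfolding b(3) x zspan_def
      by (intro CollectI exI[of _ "\<lambda>j. if j = i then 1 else 0"]) (auto simp: sum_delta_b)
  qed
  ultimately show ?thesis using that b(3) by blast
qed

lemma zspan_add: "x \<in> zspan b \<Longrightarrow> y \<in> zspan b \<Longrightarrow> x + y \<in> zspan b"
proof -
  assume "x \<in> zspan b" "y \<in> zspan b"
  then obtain c d where "x = (\<Sum>i\<in>UNIV. c i *\<^sub>R b i)" "\<forall>i. c i \<in> \<int>"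
    "y = (\<Sum>i\<in>UNIV. d i *\<^sub>R b i)" "\<forall>i. d i \<in> \<int>" unfolding zspan_def by blast
  then show ?thesis unfolding zspan_def
    by (intro CollectI exI[of _ "\<lambda>i. c i + d i"]) (auto simp: scaleR_add_left sum.distrib)
qed

lemma zspan_diff: "x \<in> zspan b \<Longrightarrow> y \<in> zspan b \<Longrightarrow> x - y \<in> zspan b"
proof -
  assume "x \<in> zspan b" "y \<in> zspan b"
  then obtain c d where "x = (\<Sum>i\<in>UNIV. c i *\<^sub>R b i)" "\<forall>i. c i \<in> \<int>"
    "y = (\<Sum>i\<in>UNIV. d i *\<^sub>R b i)" "\<forall>i. d i \<in> \<int>" unfolding zspan_def by blast
  then show ?thesis unfolding zspan_def
    by (intro CollectI exI[of _ "\<lambda>i. c i - d i"]) (auto simp: scaleR_diff_left sum_subtractf)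
qed

lemma zspan_countable:
  fixes b :: "'m::finite \<Rightarrow> real^'n"
  shows "countable (zspan b)"
proof -
  have "zspan b \<subseteq> (\<lambda>z::'m \<Rightarrow> int. \<Sum>i\<in>UNIV. of_int (z i) *\<^sub>R b i) ` UNIV"
  proof
    fix x assume "x \<in> zspan b"
    then obtain c where c: "x = (\<Sum>i\<in>UNIV. c i *\<^sub>R b i)" "\<forall>i. c i \<in> \<int>" unfolding zspan_def by blast
    have e: "of_int \<lfloor>c i\<rfloor> = c i" for i using c(2) by (metis Ints_cases floor_of_int)
    have "x = (\<Sum>i\<in>UNIV. of_int \<lfloor>c i\<rfloor> *\<^sub>R b i)" unfolding c(1) e ..
    then show "x \<in> range (\<lambda>z::'m \<Rightarrow> int. \<Sum>i\<in>UNIV. of_int (z i) *\<^sub>R b i)"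
      by (rule image_eqI[where x="\<lambda>i. \<lfloor>c i\<rfloor>"]) auto
  qed
  moreover have "countable (UNIV :: ('m \<Rightarrow> int) set)" by simp
  ultimately show ?thesis by (meson countable_image countable_subset)
qed

lemma det_Ints:
  fixes M :: "real^'n^'n"
  assumes "\<And>i j. M $ i $ j \<in> \<int>"
  shows "det M \<in> \<int>"
  unfolding det_def using assms by (intro Ints_sum Ints_mult Ints_prod) auto

lemma hyp_det: "hyperbolic_form (Q::real^'n^'n) \<Longrightarrow> det Q \<noteq> 0"
proof -
  assume "hyperbolic_form Q"
  then obtain P :: "real^'n^'n" and i0 where P: "invertible P"
    "\<forall>i j. (transpose P ** Q ** P) $ i $ j = (if i = j then (if i = i0 then 1 else -1) else 0)"
    unfolding hyperbolic_form_def by blast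
  have "det (transpose P ** Q ** P) = (\<Prod>i\<in>UNIV. (transpose P ** Q ** P) $ i $ i)"
    by (rule det_diagonal) (use P(2) in auto)
  also have "\<dots> \<noteq> 0" using P(2) by (simp add: prod_zero_iff)
  finally show ?thesis by (simp add: det_mul)
qed

lemma mat_entry: "((M::real^'n^'n) *v axis j 1) $ i = M $ i $ j"
  by (simp add: matrix_vector_mult_def axis_def if_distrib cong: if_cong)

lemma index_N:
  fixes Q :: "real^'n^'n"
  assumes "hyperbolic_form Q" "even_lattice Q L" "even_lattice Q L'" "L \<subseteq> L'"
  shows "\<exists>N::int. N > 0 \<and> (\<forall>x\<in>L'. of_int N *\<^sub>R x \<in> L)"
proof -
  obtain a :: "'n \<Rightarrow> real^'n" where a: "span (range a) = UNIV" "L = zspan a" "range a \<subseteq> L"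
    using assms(2) fl_facts unfolding even_lattice_def by blast
  have intL': "\<forall>x\<in>L'. \<forall>y\<in>L'. bform Q x y \<in> \<int>" using assms(3) unfolding even_lattice_def by blast
  have aL': "a i \<in> L'" for i using a(3) assms(4) by auto
  define A :: "real^'n^'n" where "A = (\<chi> k i. a i $ k)"
  have Av: "A *v t = (\<Sum>i\<in>UNIV. t $ i *\<^sub>R a i)" for t
    by (simp add: vec_eq_iff matrix_vector_mult_def A_def sum_component mult.commute)
  have Aax: "A *v axis j 1 = a j" for j
    by (simp add: Av axis_def sum_delta_b)
  have "range a = (\<lambda>t. A *v t) ` range (\<lambda>j. axis j 1)"
    by (simp add: image_image Aax)
  then have "span (range a) = (\<lambda>t. A *v t) ` span (range (\<lambda>j. axis j 1))"
    using real_vector.linear_span_image[OF matrix_vector_mul_linear] by metis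
  then have "span (range a) \<subseteq> range (\<lambda>t. A *v t)" by auto
  then have "surj (\<lambda>t. A *v t)" using a(1) by auto
  then have invA: "invertible A"
    using invertible_right_inverse matrix_right_invertible_surjective by blast
  define G where "G = transpose A ** Q ** A"
  have Gv: "(G *v t) $ j = bform Q (a j) (A *v t)" for t j
  proof -
    have "(G *v t) $ j = (transpose A *v (Q *v (A *v t))) $ j"
      by (simp add: G_def matrix_vector_mul_assoc matrix_mul_assoc)
    also have "\<dots> = a j \<bullet> (Q *v (A *v t))"
      by (simp add: matrix_vector_mult_def transpose_def A_def inner_vec_def mult.commute)
    finally show ?thesis by (simp add: bform_def)
  qed
  have dG: "det G \<noteq> 0"
    using hyp_det[OF assms(1)] invA by (simp add: G_def det_mul invertible_det_nz)
  have GI: "G $ i $ j \<in> \<int>" for i j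
  proof -
    have "G $ i $ j = bform Q (a i) (a j)" using Gv[of "axis j 1" i] by (simp add: mat_entry Aax)
    then show ?thesis using intL' aL' by simp
  qed
  obtain di where di: "det G = of_int di" using det_Ints[OF GI] by (metis Ints_cases)
  have "\<forall>x\<in>L'. of_int (di * di) *\<^sub>R x \<in> L"
  proof
    fix x assume x: "x \<in> L'"
    obtain t where t: "A *v t = x" using \<open>surj (\<lambda>t. A *v t)\<close> by (metis surjD)
    define m where "m = G *v t"
    have mI: "m $ i \<in> \<int>" for i
      unfolding m_def Gv t using intL' x aL' by simp
    have "t = (\<chi> k. det(\<chi> i j. if j=k then m$i else G$i$j) / det G)"
      using cramer[OF dG] m_def by blast
    then have "det G * t $ k \<in> \<int>" for k
      using dG by (simp, intro det_Ints) (auto simp: mI GI)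
    then have "of_int (di * di) * t $ k \<in> \<int>" for k
      by (metis Ints_mult Ints_of_int di mult.assoc of_int_mult)
    moreover have "of_int (di * di) *\<^sub>R x = (\<Sum>i\<in>UNIV. (of_int (di * di) * t $ i) *\<^sub>R a i)"
      using t[symmetric] by (simp add: Av scaleR_sum_right)
    ultimately show "of_int (di * di) *\<^sub>R x \<in> L" unfolding a(2) zspan_def
      by (intro CollectI exI[of _ "\<lambda>i. of_int (di * di) * t $ i"]) auto
  qed
  moreover have "di * di > 0" using dG di by (auto simp: zero_less_mult_iff linorder_neq_iff)
  ultimately show ?thesis by blast
qed

definition isom :: "real^'n^'n \<Rightarrow> real^'n^'n \<Rightarrow> bool" where
  "isom Q g \<longleftrightarrow> (\<forall>x y. bform Q (g *v x) (g *v y) = bform Q x y)"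

lemma span_L: "full_lattice (L::(real^'n) set) \<Longrightarrow> span L = UNIV"
proof -
  assume "full_lattice L"
  then obtain b :: "'n \<Rightarrow> real^'n" where "span (range b) = UNIV" "range b \<subseteq> L"
    using fl_facts by blast
  then show ?thesis by (metis span_mono top.extremum_uniqueI)
qed

lemma form_ext:
  fixes Q g :: "real^'n^'n"
  assumes "span X = UNIV" "\<forall>x\<in>X. \<forall>y\<in>X. bform Q (g *v x) (g *v y) = bform Q x y"
  shows "isom Q g"
proof -
  have 1: "bform Q (g *v x) (g *v y) = bform Q x y" if "y \<in> X" for x y
  proof -
    have "x \<in> span X" using assms(1) by simp
    then show ?thesis
      apply (rule span_induct_alt[where h="\<lambda>x. bform Q (g *v x) (g *v y) = bform Q x y"])
      using assms(2) that by (auto simp: bform_def matrix_vector_right_distrib matrix_vector_mult_scaleR inner_add_left)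
  qed
  have "bform Q (g *v x) (g *v y) = bform Q x y" for x y
  proof -
    have "y \<in> span X" using assms(1) by simp
    then show ?thesis
      apply (rule span_induct_alt[where h="\<lambda>y. bform Q (g *v x) (g *v y) = bform Q x y"])
      using 1 by (auto simp: bform_def matrix_vector_right_distrib matrix_vector_mult_scaleR inner_add_right)
  qed
  then show ?thesis unfolding isom_def by blast
qed

lemma oplus_isom: "full_lattice L \<Longrightarrow> g \<in> Oplus Q L C \<Longrightarrow> isom Q g"
  by (rule form_ext[of L]) (auto simp: span_L Oplus_def)

lemma oplus_inv:
  fixes g :: "real^'n^'n"
  assumes "full_lattice L" "(\<lambda>v. g *v v) ` L = L"
  shows "invertible g"
proof -
  have "span ((\<lambda>v. g *v v) ` L) = (\<lambda>v. g *v v) ` span L"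
    using real_vector.linear_span_image[OF matrix_vector_mul_linear] by metis
  moreover have "span L = UNIV" using span_L[OF assms(1)] .
  ultimately have "surj (\<lambda>v. g *v v)" using assms(2) by simp
  then show ?thesis
    using invertible_right_inverse matrix_right_invertible_surjective by blast
qed

lemma isom_mult: "isom Q a \<Longrightarrow> isom Q b \<Longrightarrow> isom Q (a ** b)"
  by (simp add: isom_def matrix_vector_mul_assoc[symmetric])

lemma isom_inv: "isom Q a \<Longrightarrow> a ** b = mat 1 \<Longrightarrow> isom Q b"
  unfolding isom_def by (metis matrix_vector_mul_assoc matrix_vector_mul_lid)

lemma img_mult: "(\<lambda>x. (A ** B) *v x) ` X = (\<lambda>x. A *v x) ` ((\<lambda>x. B *v x) ` X)"
  by (simp add: image_image matrix_vector_mul_assoc)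

lemma img_inv:
  assumes "B ** A = mat 1" "(\<lambda>x. A *v x) ` X = X"
  shows "(\<lambda>x. B *v x) ` X = X"
proof -
  have "(\<lambda>x. B *v x) ` X = (\<lambda>x. B *v x) ` ((\<lambda>x. A *v x) ` X)" using assms(2) by simp
  also have "\<dots> = (\<lambda>x. (B ** A) *v x) ` X" by (simp add: img_mult)
  finally show ?thesis using assms(1) by simp
qed

lemma maps_D:
  fixes Q k :: "real^'n^'n"
  assumes cD: "chamber Q L C D" and cD': "chamber Q L' C D'" and sub: "D' \<subseteq> D"
    and iso: "isom Q k" and kC: "(\<lambda>x. k *v x) ` C = C" and kL: "(\<lambda>x. k *v x) ` L = L"
    and kD': "(\<lambda>x. k *v x) ` D' = D'"
  shows "(\<lambda>x. k *v x) ` D \<subseteq> D"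
proof -
  define S where "S = hyp_space Q C - (\<Union>r\<in>roots Q L. {x. bform Q x r = 0})"
  obtain y where y: "y \<in> S" "D = connected_component_set S y"
    using cD unfolding chamber_def Let_def S_def by blast
  obtain y' where y': "y' \<in> D'"
    using cD' unfolding chamber_def Let_def by (auto intro: connected_component_refl)
  have kS: "(\<lambda>x. k *v x) ` S \<subseteq> S"
  proof
    fix z assume "z \<in> (\<lambda>x. k *v x) ` S"
    then obtain x where x: "x \<in> S" "z = k *v x" by auto
    have xC: "x \<in> C" and x1: "bform Q x x = 1" and xr: "\<forall>r\<in>roots Q L. bform Q x r \<noteq> 0"
      using x(1) unfolding S_def hyp_space_def by auto
    have zC: "z \<in> C" using xC kC x(2) by blast
    have z1: "bform Q z z = 1" using iso x1 x(2) by (simp add: isom_def)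
    have zr: "\<forall>r\<in>roots Q L. bform Q z r \<noteq> 0"
    proof
      fix r assume r: "r \<in> roots Q L"
      then have "r \<in> L" by (simp add: roots_def)
      then obtain r' where r': "r' \<in> L" "r = k *v r'" using kL by blast
      have "bform Q r' r' = -2" using r r' iso unfolding roots_def isom_def by auto
      then have "r' \<in> roots Q L" using r' by (simp add: roots_def)
      then have "bform Q x r' \<noteq> 0" using xr by blast
      then show "bform Q z r \<noteq> 0" using iso x(2) r'(2) by (simp add: isom_def)
    qed
    show "z \<in> S" unfolding S_def hyp_space_def using zC z1 zr by auto
  qed
  have y'D: "y' \<in> D" using y' sub by auto
  have ky'D: "k *v y' \<in> D" using y' kD' sub by blast
  have conn: "connected ((\<lambda>x. k *v x) ` D)"
    using y(2) by (simp add: connected_linear_image matrix_vector_mul_linear connected_connected_component)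
  have "(\<lambda>x. k *v x) ` D \<subseteq> S" using kS y(2) connected_component_subset by blast
  then have "(\<lambda>x. k *v x) ` D \<subseteq> connected_component_set S (k *v y')"
    using connected_component_maximal[OF _ conn] y'D by blast
  also have "\<dots> = D" using ky'D y(2) connected_component_eq by blast
  finally show ?thesis .
qed

lemma fam_finite:
  fixes b :: "'n \<Rightarrow> real^'n" and N :: int
  assumes "N > 0"
  shows "finite {M. M \<subseteq> zspan b \<and> (\<forall>x\<in>zspan b. of_int N *\<^sub>R x \<in> M) \<and>
                 (\<forall>x\<in>M. \<forall>y\<in>M. x - y \<in> M \<and> x + y \<in> M)}" (is "finite ?Fam")
proof -
  define F where "F = (\<lambda>z::'n \<Rightarrow> int. \<Sum>i\<in>UNIV. of_int (z i) *\<^sub>R b i) ` {z. \<forall>i. 0 \<le> z i \<and> z i < N}"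
  have "{z::'n\<Rightarrow>int. \<forall>i. 0 \<le> z i \<and> z i < N} \<subseteq> PiE UNIV (\<lambda>_. {0..<N})"
    by (auto simp: PiE_def extensional_def)
  moreover have "finite (PiE (UNIV::'n set) (\<lambda>_. {0..<N}))"
    by (rule finite_PiE) auto
  ultimately have finF: "finite F" unfolding F_def by (meson finite_imageI finite_subset)
  have dec: "\<exists>f\<in>F. \<exists>y\<in>zspan b. x = f + of_int N *\<^sub>R y" if xz: "x \<in> zspan b" for x
  proof -
    obtain c where c: "x = (\<Sum>i\<in>UNIV. c i *\<^sub>R b i)" "\<forall>i. c i \<in> \<int>"
      using xz unfolding zspan_def by blast
    define w where "w i = \<lfloor>c i\<rfloor>" for i
    have cw: "c i = of_int (w i)" for i using c(2) unfolding w_def by (metis Ints_cases floor_of_int)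
    define f where "f = (\<Sum>i\<in>UNIV. of_int (w i mod N) *\<^sub>R b i)"
    define y where "y = (\<Sum>i\<in>UNIV. of_int (w i div N) *\<^sub>R b i)"
    have "f \<in> F" unfolding F_def f_def
      by (rule image_eqI[where x="\<lambda>i. w i mod N"]) (auto simp: assms)
    moreover have "y \<in> zspan b" unfolding y_def zspan_def
      by (intro CollectI exI[of _ "\<lambda>i. of_int (w i div N)"]) auto
    moreover have "x = f + of_int N *\<^sub>R y"
    proof -
      have e: "real_of_int (w i) = of_int (w i mod N) + of_int N * of_int (w i div N)" for i
      proof -
        have "w i = w i mod N + N * (w i div N)" by simp
        then show ?thesis by (metis of_int_add of_int_mult)
      qed
      have "x = (\<Sum>i\<in>UNIV. (of_int (w i mod N) + of_int N * of_int (w i div N)) *\<^sub>R b i)"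
        unfolding c(1) cw e ..
      also have "\<dots> = f + of_int N *\<^sub>R y"
        by (simp add: f_def y_def scaleR_add_left sum.distrib scaleR_sum_right)
      finally show ?thesis .
    qed
    ultimately show ?thesis by blast
  qed
  have sub: "M \<subseteq> M'" if "M \<in> ?Fam" "M' \<in> ?Fam" "M \<inter> F = M' \<inter> F" for M M'
  proof
    fix x assume xM: "x \<in> M"
    have M1: "M \<subseteq> zspan b" "\<forall>x\<in>zspan b. of_int N *\<^sub>R x \<in> M" "\<forall>x\<in>M. \<forall>y\<in>M. x - y \<in> M \<and> x + y \<in> M"
      using that(1) by simp_all
    have M2: "\<forall>x\<in>zspan b. of_int N *\<^sub>R x \<in> M'" "\<forall>x\<in>M'. \<forall>y\<in>M'. x - y \<in> M' \<and> x + y \<in> M'"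
      using that(2) by simp_all
    have "x \<in> zspan b" using xM M1(1) by blast
    then obtain f y where fy: "f \<in> F" "y \<in> zspan b" "x = f + of_int N *\<^sub>R y" using dec by blast
    have NM: "of_int N *\<^sub>R y \<in> M" "of_int N *\<^sub>R y \<in> M'" using M1(2) M2(1) fy(2) by blast+
    have "f = x - of_int N *\<^sub>R y" using fy(3) by simp
    then have "f \<in> M" using xM NM(1) M1(3) by blast
    then have "f \<in> M'" using fy(1) that(3) by blast
    then show "x \<in> M'" using fy(3) NM(2) M2(2) by blast
  qed
  have inj: "inj_on (\<lambda>M. M \<inter> F) ?Fam"
  proof (rule inj_onI)
    fix M M' assume "M \<in> ?Fam" "M' \<in> ?Fam" "M \<inter> F = M' \<inter> F"
    then show "M = M'" using sub[of M M'] sub[of M' M] by blast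
  qed
  have im: "(\<lambda>M. M \<inter> F) ` ?Fam \<subseteq> Pow F" by blast
  have "finite (Pow F)" using finF by simp
  then show ?thesis using inj_on_finite[OF inj im] by blast
qed

lemma bform_scale: "bform Q (c *\<^sub>R x) y = c * bform Q x y" "bform Q x (c *\<^sub>R y) = c * bform Q x y"
  by (simp_all add: bform_def matrix_vector_mult_scaleR)

lemma part1:
  fixes Q :: "real^'n^'n" and L L' C :: "(real^'n) set" and x0 :: "real^'n"
  assumes eL': "even_lattice Q L'" and LL': "L \<subseteq> L'" and x0: "bform Q x0 x0 > 0"
    and C: "C = connected_component_set {x. bform Q x x > 0} x0"
  shows "\<exists>D D'. chamber Q L C D \<and> chamber Q L' C D' \<and> D' \<subseteq> D"
proof -
  define P where "P = {x::real^'n. bform Q x x > 0}"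
  have contb: "continuous_on UNIV (\<lambda>x::real^'n. bform Q x x)"
    unfolding bform_def by (intro continuous_intros matrix_vector_mult_linear_continuous_on)
  have "open P" unfolding P_def using open_Collect_less[OF continuous_on_const contb] by simp
  moreover have "x0 \<in> P" using x0 unfolding P_def by simp
  ultimately obtain e where e: "e > 0" "ball x0 e \<subseteq> P" unfolding open_contains_ball by blast
  have ballC: "ball x0 e \<subseteq> C" unfolding C P_def[symmetric]
    by (rule connected_component_maximal) (use e in auto)
  define R where "R = roots Q L'"
  have flL': "full_lattice L'" using eL' unfolding even_lattice_def by (rule conjunct1)
  obtain b :: "'n \<Rightarrow> real^'n" where b: "L' = zspan b" by (metis fl_facts[OF flL'])
  have "R \<subseteq> L'" unfolding R_def roots_def by blast
  then have cR: "countable R" using zspan_countable[of b] b countable_subset by blast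
  define H where "H = (\<Union>r\<in>R. {x. bform Q x r = 0})"
  have hyp: "negligible {x. bform Q x r = 0}" if "r \<in> R" for r
  proof -
    have "bform Q r r = -2" using that by (simp add: R_def roots_def)
    then have "Q *v r \<noteq> 0" by (auto simp: bform_def)
    then have "negligible {x. (Q *v r) \<bullet> x = 0}" using negligible_hyperplane by blast
    moreover have "{x. bform Q x r = 0} = {x. (Q *v r) \<bullet> x = 0}" by (simp add: bform_def inner_commute)
    ultimately show ?thesis by simp
  qed
  have "negligible H" unfolding H_def
    by (rule negligible_countable_Union) (use cR hyp in auto)
  moreover have "\<not> negligible (ball x0 e)" using e(1) by (intro open_not_negligible) auto
  ultimately have "\<not> ball x0 e \<subseteq> H" using negligible_subset by blast
  then obtain y where y: "y \<in> ball x0 e" "y \<notin> H" by blast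
  have yC: "y \<in> C" using y ballC by blast
  have yP: "bform Q y y > 0" using y e unfolding P_def by blast
  define s where "s = bform Q y y"
  have s0: "s > 0" "sqrt s > 0" using yP by (simp_all add: s_def)
  define z where "z = (1 / sqrt s) *\<^sub>R y"
  have z1: "bform Q z z = 1"
  proof -
    have "bform Q z z = (1 / sqrt s) * (1 / sqrt s) * s" by (simp add: z_def bform_scale s_def)
    also have "\<dots> = 1" using s0 by (simp add: field_simps)
    finally show ?thesis .
  qed
  have zH: "z \<notin> H"
  proof
    assume "z \<in> H"
    then obtain r where r: "r \<in> R" "bform Q z r = 0" unfolding H_def by blast
    then have "bform Q y r = 0" using s0 by (simp add: z_def bform_scale)
    then show False using y(2) r(1) unfolding H_def by blast
  qed
  have seg: "closed_segment y z \<subseteq> P"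
  proof
    fix w assume "w \<in> closed_segment y z"
    then obtain u where u: "0 \<le> u" "u \<le> 1" "w = (1-u) *\<^sub>R y + u *\<^sub>R z" by (auto simp: in_segment)
    define c where "c = (1-u) + u / sqrt s"
    have w: "w = c *\<^sub>R y" by (simp add: u(3) z_def c_def algebra_simps)
    have "c > 0"
    proof (cases "u = 1")
      case True then show ?thesis using s0 by (simp add: c_def)
    next
      case False then have "1 - u > 0" using u by simp
      moreover have "u / sqrt s \<ge> 0" using u s0 by simp
      ultimately show ?thesis by (simp add: c_def)
    qed
    then have "bform Q w w = c * c * s" by (simp add: w bform_scale s_def)
    also have "\<dots> > 0" using \<open>c > 0\<close> s0 by simp
    finally show "w \<in> P" unfolding P_def by simp
  qed
  have "closed_segment y z \<subseteq> connected_component_set P y"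
    by (rule connected_component_maximal) (auto simp: seg)
  moreover have "connected_component_set P y = C" using yC unfolding C P_def
    by (rule connected_component_eq)
  ultimately have zC: "z \<in> C" by auto
  define S' where "S' = hyp_space Q C - (\<Union>r\<in>roots Q L'. {x. bform Q x r = 0})"
  define S where "S = hyp_space Q C - (\<Union>r\<in>roots Q L. {x. bform Q x r = 0})"
  have zS': "z \<in> S'" using zC z1 zH unfolding S'_def hyp_space_def H_def R_def by auto
  have "roots Q L \<subseteq> roots Q L'" using LL' unfolding roots_def by blast
  then have SS: "S' \<subseteq> S" unfolding S_def S'_def by blast
  have zS: "z \<in> S" using zS' SS by blast
  have c1: "chamber Q L C (connected_component_set S z)"
    unfolding chamber_def Let_def S_def[symmetric] using zS by blast
  have c2: "chamber Q L' C (connected_component_set S' z)"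
    unfolding chamber_def Let_def S'_def[symmetric] using zS' by blast
  have "connected_component_set S' z \<subseteq> connected_component_set S z"
    using SS by (rule connected_component_mono)
  then show ?thesis using c1 c2 by blast
qed

lemma part2:
  fixes Q :: "real^'n^'n" and L L' C D D' :: "(real^'n) set"
  assumes hyp: "hyperbolic_form Q" and eL: "even_lattice Q L" and eL': "even_lattice Q L'"
    and LL': "L \<subseteq> L'"
    and cD: "chamber Q L C D" and cD': "chamber Q L' C D'" and sub: "D' \<subseteq> D"
  shows "exceptional_lattice Q L C D \<subseteq> exceptional_lattice Q L' C D'"
proof
  fix v assume "v \<in> exceptional_lattice Q L C D"
  then have vfin: "v \<in> L \<and> finite ((\<lambda>g. g *v v) ` Aut_chamber Q L C D)"
    unfolding exceptional_lattice_def by (rule CollectD)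
  have vL: "v \<in> L" using vfin by (rule conjunct1)
  have finO: "finite ((\<lambda>g. g *v v) ` Aut_chamber Q L C D)" using vfin by (rule conjunct2)
  define Orb where "Orb = (\<lambda>g. g *v v) ` Aut_chamber Q L C D"
  define G' where "G' = Aut_chamber Q L' C D'"
  have flL: "full_lattice L" using eL unfolding even_lattice_def by (rule conjunct1)
  have flL': "full_lattice L'" using eL' unfolding even_lattice_def by (rule conjunct1)
  obtain N where N: "N > 0" "\<forall>x\<in>L'. of_int N *\<^sub>R x \<in> L"
    using index_N[OF hyp eL eL' LL'] by blast
  obtain b :: "'n \<Rightarrow> real^'n" where b: "L' = zspan b"
    by (metis fl_facts[OF flL'])
  have Lclosed: "x - y \<in> L \<and> x + y \<in> L" if "x \<in> L" "y \<in> L" for x y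
  proof -
    obtain a :: "'n \<Rightarrow> real^'n" where a: "L = zspan a" by (metis fl_facts[OF flL])
    show ?thesis using that unfolding a by (simp add: zspan_add zspan_diff)
  qed
  have G'facts: "(\<lambda>x. g *v x) ` L' = L'" "(\<lambda>x. g *v x) ` C = C" "(\<lambda>x. g *v x) ` D' = D'"
     "isom Q g" "invertible g" if "g \<in> G'" for g
  proof -
    have gO: "g \<in> Oplus Q L' C" and gD: "(\<lambda>x. g *v x) ` D' = D'"
      using that unfolding G'_def Aut_chamber_def by blast+
    then show "(\<lambda>x. g *v x) ` L' = L'" "(\<lambda>x. g *v x) ` C = C" "(\<lambda>x. g *v x) ` D' = D'"
      unfolding Oplus_def by blast+
    show "isom Q g" using oplus_isom[OF flL' gO] .
    show "invertible g" using oplus_inv[OF flL'] \<open>(\<lambda>x. g *v x) ` L' = L'\<close> by blast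
  qed
  define Fam where "Fam = {M. M \<subseteq> zspan b \<and> (\<forall>x\<in>zspan b. of_int N *\<^sub>R x \<in> M) \<and>
                 (\<forall>x\<in>M. \<forall>y\<in>M. x - y \<in> M \<and> x + y \<in> M)}"
  have finFam: "finite Fam" unfolding Fam_def using fam_finite[OF N(1)] .
  define Ms where "Ms = (\<lambda>g. (\<lambda>x. g *v x) ` L) ` G'"
  have "Ms \<subseteq> Fam"
  proof
    fix M assume "M \<in> Ms"
    then obtain g where g: "g \<in> G'" "M = (\<lambda>x. g *v x) ` L" unfolding Ms_def by blast
    have "M \<subseteq> (\<lambda>x. g *v x) ` L'" unfolding g(2) using LL' by (rule image_mono)
    then have "M \<subseteq> zspan b" using G'facts(1)[OF g(1)] b by simp
    moreover have "of_int N *\<^sub>R x \<in> M" if "x \<in> zspan b" for x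
    proof -
      have "x \<in> (\<lambda>x. g *v x) ` L'" using that b G'facts(1)[OF g(1)] by simp
      then obtain x' where x': "x' \<in> L'" "x = g *v x'" by blast
      have "of_int N *\<^sub>R x' \<in> L" using N(2) x'(1) by blast
      moreover have "g *v (of_int N *\<^sub>R x') = of_int N *\<^sub>R x" using x'(2) by (simp add: matrix_vector_mult_scaleR)
      ultimately show ?thesis unfolding g(2) by (metis image_eqI)
    qed
    moreover have "x - y \<in> M \<and> x + y \<in> M" if "x \<in> M" "y \<in> M" for x y
    proof -
      have "x \<in> (\<lambda>x. g *v x) ` L" "y \<in> (\<lambda>x. g *v x) ` L" using that unfolding g(2) by simp_all
      then obtain x' y' where xy: "x' \<in> L" "y' \<in> L" "x = g *v x'" "y = g *v y'" by blast
      have "x - y = g *v (x' - y')" "x + y = g *v (x' + y')"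
        using xy by (simp_all add: matrix_vector_mult_diff_distrib matrix_vector_right_distrib)
      moreover have "x' - y' \<in> L" "x' + y' \<in> L" using Lclosed[OF xy(1,2)] by simp_all
      ultimately show ?thesis unfolding g(2) by blast
    qed
    ultimately show "M \<in> Fam" unfolding Fam_def by blast
  qed
  then have finMs: "finite Ms" using finFam by (rule finite_subset)
  define hM where "hM M = (SOME h. h \<in> G' \<and> (\<lambda>x. h *v x) ` L = M)" for M
  have key: "g *v v \<in> (\<lambda>w. hM ((\<lambda>x. g *v x) ` L) *v w) ` Orb" if gG: "g \<in> G'" for g
  proof -
    define h where "h = hM ((\<lambda>x. g *v x) ` L)"
    have "\<exists>h. h \<in> G' \<and> (\<lambda>x. h *v x) ` L = (\<lambda>x. g *v x) ` L" using gG by blast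
    then have hh: "h \<in> G' \<and> (\<lambda>x. h *v x) ` L = (\<lambda>x. g *v x) ` L"
      unfolding h_def hM_def by (rule someI_ex)
    then have h: "h \<in> G'" "(\<lambda>x. h *v x) ` L = (\<lambda>x. g *v x) ` L" by simp_all
    obtain gi where gi: "g ** gi = mat 1" "gi ** g = mat 1"
      using G'facts(5)[OF gG] unfolding invertible_def by blast
    obtain hi where hi: "h ** hi = mat 1" "hi ** h = mat 1"
      using G'facts(5)[OF h(1)] unfolding invertible_def by blast
    define k where "k = hi ** g"
    define ki where "ki = gi ** h"
    have kL: "(\<lambda>x. k *v x) ` L = L"
    proof -
      have "(\<lambda>x. k *v x) ` L = (\<lambda>x. hi *v x) ` ((\<lambda>x. h *v x) ` L)"
        by (simp add: k_def img_mult h(2))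
      also have "\<dots> = (\<lambda>x. (hi ** h) *v x) ` L" by (simp add: img_mult)
      finally show ?thesis by (simp add: hi)
    qed
    have kiL: "(\<lambda>x. ki *v x) ` L = L"
    proof -
      have "(\<lambda>x. ki *v x) ` L = (\<lambda>x. gi *v x) ` ((\<lambda>x. g *v x) ` L)"
        by (simp add: ki_def img_mult h(2))
      also have "\<dots> = (\<lambda>x. (gi ** g) *v x) ` L" by (simp add: img_mult)
      finally show ?thesis by (simp add: gi)
    qed
    have giX: "(\<lambda>x. gi *v x) ` X = X" if "(\<lambda>x. g *v x) ` X = X" for X
      using img_inv[OF gi(2) that] .
    have hiX: "(\<lambda>x. hi *v x) ` X = X" if "(\<lambda>x. h *v x) ` X = X" for X
      using img_inv[OF hi(2) that] .
    have kX: "(\<lambda>x. k *v x) ` X = X" "(\<lambda>x. ki *v x) ` X = X"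
      if "(\<lambda>x. g *v x) ` X = X" "(\<lambda>x. h *v x) ` X = X" for X
      using that giX hiX by (simp_all add: k_def ki_def img_mult)
    have kC: "(\<lambda>x. k *v x) ` C = C" "(\<lambda>x. ki *v x) ` C = C"
      using kX[OF G'facts(2)[OF gG] G'facts(2)[OF h(1)]] by simp_all
    have kD': "(\<lambda>x. k *v x) ` D' = D'" "(\<lambda>x. ki *v x) ` D' = D'"
      using kX[OF G'facts(3)[OF gG] G'facts(3)[OF h(1)]] by simp_all
    have isoi: "isom Q gi" "isom Q hi"
      using isom_inv[OF G'facts(4)[OF gG] gi(1)] isom_inv[OF G'facts(4)[OF h(1)] hi(1)] by blast+
    have kiso: "isom Q k" "isom Q ki"
      using isom_mult isoi G'facts(4)[OF gG] G'facts(4)[OF h(1)] by (simp_all add: k_def ki_def)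
    have kD: "(\<lambda>x. k *v x) ` D \<subseteq> D"
      by (rule maps_D[OF cD cD' sub kiso(1) kC(1) kL kD'(1)])
    have kiD: "(\<lambda>x. ki *v x) ` D \<subseteq> D"
      by (rule maps_D[OF cD cD' sub kiso(2) kC(2) kiL kD'(2)])
    have kki: "k ** ki = mat 1"
    proof -
      have "k ** ki = hi ** ((g ** gi) ** h)" by (simp add: k_def ki_def matrix_mul_assoc)
      then show ?thesis by (simp add: gi hi)
    qed
    have "D \<subseteq> (\<lambda>x. k *v x) ` D"
    proof
      fix x assume "x \<in> D"
      then have "ki *v x \<in> D" using kiD by blast
      moreover have "x = k *v (ki *v x)" by (simp add: matrix_vector_mul_assoc kki)
      ultimately show "x \<in> (\<lambda>x. k *v x) ` D" by blast
    qed
    then have kDeq: "(\<lambda>x. k *v x) ` D = D" using kD by (intro subset_antisym)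
    have "k \<in> Aut_chamber Q L C D"
      using kiso(1) unfolding Aut_chamber_def Oplus_def isom_def mem_Collect_eq
      by (simp add: kL kC(1) kDeq)
    then have "k *v v \<in> Orb" unfolding Orb_def by (rule imageI)
    moreover have "g *v v = h *v (k *v v)"
    proof -
      have "h ** (hi ** g) = g" by (simp add: matrix_mul_assoc hi(1) matrix_mul_lid)
      then show ?thesis by (simp add: k_def matrix_vector_mul_assoc)
    qed
    ultimately have "g *v v \<in> (\<lambda>w. h *v w) ` Orb" by (metis image_eqI)
    then show ?thesis unfolding h_def .
  qed
  have "(\<lambda>g. g *v v) ` G' \<subseteq> (\<Union>M\<in>Ms. (\<lambda>w. hM M *v w) ` Orb)"
  proof
    fix y assume "y \<in> (\<lambda>g. g *v v) ` G'"
    then obtain g where g: "g \<in> G'" "y = g *v v" by blast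
    then have "(\<lambda>x. g *v x) ` L \<in> Ms" unfolding Ms_def by blast
    then show "y \<in> (\<Union>M\<in>Ms. (\<lambda>w. hM M *v w) ` Orb)" using key[OF g(1)] g(2) by blast
  qed
  moreover have "finite (\<Union>M\<in>Ms. (\<lambda>w. hM M *v w) ` Orb)"
  proof -
    have "finite Orb" using finO unfolding Orb_def .
    then show ?thesis using finMs by (intro finite_UN_I finite_imageI)
  qed
  ultimately have "finite ((\<lambda>g. g *v v) ` G')" by (rule finite_subset)
  then show "v \<in> exceptional_lattice Q L' C D'"
    using vL LL' unfolding exceptional_lattice_def G'_def by auto
qed

theorem lemma3p1:
  fixes Q :: "real^'n^'n" and L L' C :: "(real^'n) set" and x0 :: "real^'n"
  assumes "hyperbolic_form Q"
    and "even_lattice Q L"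
    and "even_lattice Q L'"
    and "L \<subseteq> L'"
    and "bform Q x0 x0 > 0"
    and "C = connected_component_set {x. bform Q x x > 0} x0"
  shows "(\<exists>D D'. chamber Q L C D \<and> chamber Q L' C D' \<and> D' \<subseteq> D) \<and>
         (\<forall>D D'. chamber Q L C D \<and> chamber Q L' C D' \<and> D' \<subseteq> D \<longrightarrow>
            exceptional_lattice Q L C D \<subseteq> exceptional_lattice Q L' C D')"
proof
  show "\<exists>D D'. chamber Q L C D \<and> chamber Q L' C D' \<and> D' \<subseteq> D"
    by (rule part1[OF assms(3,4,5,6)])
  show "\<forall>D D'. chamber Q L C D \<and> chamber Q L' C D' \<and> D' \<subseteq> D \<longrightarrow>
            exceptional_lattice Q L C D \<subseteq> exceptional_lattice Q L' C D'"
    using part2[OF assms(1,2,3,4)] by blast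
qed

end
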